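(* Let $m\ge1$ and $n\ge2$ be integers, and let $p_{m,r}(n)$, $0\le r\le m$, be the unique numbers such that $S(m,n,\alpha)=\sum_{r=0}^m p_{m,r}(n)\cot^r\alpha$ for all real $\alpha\notin\pi\mathbb{Z}$. Then $$p_{2m,0}(n)=S(2m,n,\pi/2),$$ and for $1\le r\le m$, $$p_{m,r}(n)=\frac{1}{r\,(m-1)!}\sum_{k=r}^m n^kA_m^{(k)}T_k^{(r)}.$$
   Context: $S(m,n,\alpha)=\sum_{k=0}^{n-1}\cot^m\frac{\alpha+k\pi}{n}$, which is a polynomial of degree at most $m$ in $\cot\alpha$. The arctangent numbers $A_m^{(k)}$ are defined by $\frac{(\arctan z)^k}{k!}=\sum_{m\ge k}\frac{A_m^{(k)}}{m!}z^m$. The higher-order tangent numbers $T_k^{(r)}$ are defined by $\tan^r z=\sum_{k\ge r}\frac{T_k^{(r)}}{k!}z^k$. *)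

theory Defs
  imports Complex_Main "HOL-Computational_Algebra.Formal_Power_Series"
begin

definition Ssum :: "nat \<Rightarrow> nat \<Rightarrow> real \<Rightarrow> real" where
  "Ssum m n \<alpha> = (\<Sum>k<n. cot ((\<alpha> + real k * pi) / real n) ^ m)"

definition fps_arctan :: "real fps" where
  "fps_arctan = Abs_fps (\<lambda>i. if odd i then (-1) ^ (i div 2) / real i else 0)"

text \<open>Arctangent numbers: (arctan z)^k / k! = sum_m A_m^(k) z^m / m!\<close>
definition arctan_num :: "nat \<Rightarrow> nat \<Rightarrow> real" where
  "arctan_num m k = fact m * (fps_nth (fps_arctan ^ k) m / fact k)"

text \<open>Higher-order tangent numbers: tan^r z = sum_k T_k^(r) z^k / k!\<close>
definition tan_num :: "nat \<Rightarrow> nat \<Rightarrow> real" where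
  "tan_num k r = fact k * (fps_nth (fps_tan (1::real) ^ r) k)"

end

theory Submission
  imports Defs "HOL-Computational_Algebra.Polynomial_FPS"
begin

unbundle fps_syntax


fun ABp :: "nat \<Rightarrow> real poly \<times> real poly" where
  "ABp 0 = (1, 0)"
| "ABp (Suc j) = (fst (ABp j) - [:0,1:] * snd (ABp j), snd (ABp j) + [:0,1:] * fst (ABp j))"

definition Af :: "nat \<Rightarrow> real fps" where "Af j = fps_of_poly (fst (ABp j))"
definition Bf :: "nat \<Rightarrow> real fps" where "Bf j = fps_of_poly (snd (ABp j))"

lemma Af_0: "Af 0 = 1" and Bf_0: "Bf 0 = 0" by (simp_all add: Af_def Bf_def)
lemma Af_Suc: "Af (Suc j) = Af j - fps_X * Bf j"
  by (simp add: Af_def Bf_def fps_of_poly_diff fps_of_poly_mult)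
lemma Bf_Suc: "Bf (Suc j) = Bf j + fps_X * Af j"
  by (simp add: Af_def Bf_def fps_of_poly_add fps_of_poly_mult)

lemma AB_nth0: "Af j $ 0 = 1 \<and> Bf j $ 0 = 0"
  by (induction j) (simp_all add: Af_0 Bf_0 Af_Suc Bf_Suc)

lemma AB_key:
  "Af j ^ 2 + Bf j ^ 2 = (1 + fps_X^2) ^ j \<and>
   (1 + fps_X^2) * (Af j * fps_deriv (Bf j) - Bf j * fps_deriv (Af j)) = of_nat j * (1 + fps_X^2) ^ j"
proof (induction j)
  case 0
  then show ?case by (simp add: Af_0 Bf_0)
next
  case (Suc j)
  let ?A = "Af j" and ?B = "Bf j" and ?Q = "(1 + fps_X^2 :: real fps)"
  have N: "Af (Suc j) ^ 2 + Bf (Suc j) ^ 2 = ?Q * (?A^2 + ?B^2)"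
    by (simp add: Af_Suc Bf_Suc power2_eq_square algebra_simps)
  have D: "Af (Suc j) * fps_deriv (Bf (Suc j)) - Bf (Suc j) * fps_deriv (Af (Suc j))
      = ?Q * (?A * fps_deriv ?B - ?B * fps_deriv ?A) + (?A^2 + ?B^2)"
    by (simp add: Af_Suc Bf_Suc power2_eq_square algebra_simps)
  show ?case using Suc N D by (simp add: algebra_simps)
qed



definition Vf :: "nat \<Rightarrow> real fps" where "Vf n = Bf n * inverse (Af n)"

lemma Vf_nth0: "Vf n $ 0 = 0"
  using AB_nth0[of n] by (simp add: Vf_def)

lemma AV: "Af n * Vf n = Bf n"
proof -
  have "Af n * inverse (Af n) = 1" using AB_nth0[of n] by (intro inverse_mult_eq_1') simp
  then show ?thesis unfolding Vf_def by (metis mult.commute mult.left_neutral mult.assoc)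
qed

lemma V_ode: "fps_deriv (Vf n) * (1 + fps_X^2) = of_nat n * (1 + Vf n ^ 2)"
proof -
  let ?A = "Af n" and ?B = "Bf n" and ?V = "Vf n" and ?Q = "(1 + fps_X^2 :: real fps)"
  have A0: "?A \<noteq> 0" using AB_nth0[of n] by (intro fps_nonzeroI[of _ 0]) simp
  have d: "fps_deriv ?A * ?V + ?A * fps_deriv ?V = fps_deriv ?B"
    using arg_cong[OF AV[of n], of fps_deriv] by (simp add: algebra_simps)
  have k: "?Q * (?A * fps_deriv ?B - ?B * fps_deriv ?A) = of_nat n * (?A^2 + ?B^2)"
    using AB_key[of n] by simp
  have "?A^2 * (fps_deriv ?V * ?Q) = ?Q * (?A * (?A * fps_deriv ?V))"
    by (simp add: power2_eq_square algebra_simps)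
  also have "?A * fps_deriv ?V = fps_deriv ?B - fps_deriv ?A * ?V"
    using d by (simp add: eq_diff_eq add.commute)
  also have "?A * (fps_deriv ?B - fps_deriv ?A * ?V) = ?A * fps_deriv ?B - fps_deriv ?A * (?A * ?V)"
    by (simp add: algebra_simps)
  also have "?A * ?V = ?B" by (rule AV)
  also have "?Q * (?A * fps_deriv ?B - fps_deriv ?A * ?B) = ?Q * (?A * fps_deriv ?B - ?B * fps_deriv ?A)"
    by (simp add: mult.commute)
  also have "\<dots> = of_nat n * (?A^2 + (?A * ?V)^2)" using k AV[of n] by simp
  also have "\<dots> = ?A^2 * (of_nat n * (1 + ?V^2))" by (simp add: power2_eq_square algebra_simps)
  finally show ?thesis using A0 by simp
qed

lemma arctan_deriv: "fps_deriv fps_arctan * (1 + fps_X^2) = 1"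
proof (rule fps_ext)
  fix k
  have e: "fps_deriv fps_arctan $ i = (if even i then (-1) ^ (i div 2) else 0)" for i
    by (auto simp: fps_arctan_def)
  have "(fps_deriv fps_arctan * (1 + fps_X^2)) $ k
        = fps_deriv fps_arctan $ k + (if k < 2 then 0 else fps_deriv fps_arctan $ (k - 2))"
    by (simp add: distrib_left fps_X_power_mult_right_nth del: fps_deriv_nth)
  also have "\<dots> = (1::real fps) $ k"
  proof (cases "k < 2")
    case True then show ?thesis by (cases k) (auto simp: fps_arctan_def)
  next
    case False
    then obtain j where j: "k = j + 2" by (metis add.commute le_Suc_ex not_less)
    show ?thesis unfolding e j by (auto simp: power_add)
  qed
  finally show "(fps_deriv fps_arctan * (1 + fps_X^2)) $ k = (1::real fps) $ k" .
qed



definition Uf :: "nat \<Rightarrow> real fps" where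
  "Uf n = fps_tan 1 oo (fps_const (real n) * fps_arctan)"

lemma arctan_nth0: "fps_arctan $ 0 = 0" by (simp add: fps_arctan_def)

lemma U_ode: "fps_deriv (Uf n) * (1 + fps_X^2) = of_nat n * (1 + Uf n ^ 2)"
proof -
  define b where "b = fps_const (real n) * fps_arctan"
  have b0: "b $ 0 = 0" by (simp add: b_def arctan_nth0)
  define C where "C = fps_cos (1::real) oo b"
  define S where "S = fps_sin (1::real) oo b"
  define U where "U = Uf n"
  have U: "U = fps_tan 1 oo b" by (simp add: U_def Uf_def b_def)
  have tc: "fps_tan (1::real) * fps_cos 1 = fps_sin 1"
    by (simp add: fps_tan_def fps_divide_unit mult.assoc inverse_mult_eq_1)
  have UC: "U * C = S"
    using arg_cong[OF tc, of "\<lambda>f. f oo b"] by (simp add: U C_def S_def fps_compose_mult_distrib[OF b0])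
  have C0: "C \<noteq> 0" by (intro fps_nonzeroI[of _ 0]) (simp add: C_def)
  have dS: "fps_deriv S = C * fps_deriv b"
    by (simp add: S_def C_def fps_compose_deriv[OF b0] fps_sin_deriv)
  have dC: "fps_deriv C = - S * fps_deriv b"
  proof -
    have "fps_deriv C = (fps_const (-1) * fps_sin 1 oo b) * fps_deriv b"
      by (simp add: C_def fps_compose_deriv[OF b0] fps_cos_deriv)
    also have "fps_const (-1) * fps_sin 1 oo b = fps_const (-1) * S"
      by (simp add: S_def fps_const_mult_apply_left)
    moreover have "fps_const (-1::real) = -1" by (simp add: fps_eq_iff)
    ultimately show ?thesis by simp
  qed
  have "fps_deriv U * C + U * fps_deriv C = fps_deriv S"
    using arg_cong[OF UC, of fps_deriv] by (simp add: add.commute)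
  hence "C * fps_deriv U = C * ((1 + U^2) * fps_deriv b)"
    unfolding dS dC by (simp add: power2_eq_square algebra_simps flip: UC)
  hence dU: "fps_deriv U = (1 + U^2) * fps_deriv b" using C0 by simp
  have "fps_deriv U * (1 + fps_X^2) = (1 + U^2) * fps_const (real n) * (fps_deriv fps_arctan * (1 + fps_X^2))"
    by (simp add: dU b_def algebra_simps)
  also have "\<dots> = of_nat n * (1 + U^2)" by (simp add: arctan_deriv fps_of_nat mult.commute)
  finally show ?thesis by (simp add: U_def)
qed

lemma Uf_nth0: "Uf n $ 0 = 0"
  by (simp add: Uf_def fps_tan_def fps_divide_unit)

lemma ode_unique:
  fixes f g :: "real fps" and c :: real
  assumes f: "fps_deriv f * (1 + fps_X^2) = fps_const c * (1 + f^2)"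
      and g: "fps_deriv g * (1 + fps_X^2) = fps_const c * (1 + g^2)"
      and fg0: "f $ 0 = g $ 0"
  shows "f = g"
proof -
  have "\<forall>i\<le>k. f $ i = g $ i" for k
  proof (induction k)
    case 0 then show ?case using fg0 by simp
  next
    case (Suc k)
    have lhs: "(fps_deriv h * (1 + fps_X^2)) $ k
        = of_nat (k+1) * h $ (k+1) + (if k < 2 then 0 else fps_deriv h $ (k - 2))" for h :: "real fps"
      by (simp add: distrib_left fps_X_power_mult_right_nth)
    have sq: "(f^2) $ k = (g^2) $ k"
      using Suc.IH by (auto simp: power2_eq_square fps_mult_nth intro!: sum.cong)
    have d: "k \<ge> 2 \<Longrightarrow> fps_deriv f $ (k-2) = fps_deriv g $ (k-2)"
      using Suc.IH by simp
    have "of_nat (k+1) * f $ (k+1) = of_nat (k+1) * g $ (k+1)"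
      using arg_cong[OF f, of "\<lambda>h. h $ k"] arg_cong[OF g, of "\<lambda>h. h $ k"] sq d
      unfolding lhs by (auto simp: algebra_simps split: if_splits)
    hence "f $ (k+1) = g $ (k+1)" by (simp del: of_nat_Suc)
    then show ?case using Suc.IH by (metis Suc_eq_plus1 le_Suc_eq)
  qed
  then show ?thesis by (intro fps_ext) auto
qed

lemma U_eq_V: "Uf n = Vf n"
  by (rule ode_unique[of _ "real n"]) (simp_all add: U_ode V_ode Uf_nth0 Vf_nth0 fps_of_nat)



definition Gf :: "real \<Rightarrow> real fps" where
  "Gf y = Abs_fps (\<lambda>i. if i = 0 then 0 else y ^ i)"

lemma Gf_eq: "(1 - fps_const y * fps_X) * Gf y = fps_const y * fps_X"
proof (rule fps_ext)
  fix i
  show "((1 - fps_const y * fps_X) * Gf y) $ i = (fps_const y * fps_X) $ i"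
    by (cases i) (auto simp: Gf_def algebra_simps fps_X_mult_nth)
qed

lemma newton:
  assumes "finite K"
  shows "- fps_X * fps_deriv (\<Prod>k\<in>K. 1 - fps_const (y k) * fps_X)
     = (\<Prod>k\<in>K. 1 - fps_const (y k) * fps_X) * (\<Sum>k\<in>K. Gf (y k))"
  using assms
proof (induction K rule: finite_induct)
  case empty then show ?case by simp
next
  case (insert a K)
  let ?P = "\<Prod>k\<in>K. 1 - fps_const (y k) * fps_X"
  have "- fps_X * fps_deriv (\<Prod>k\<in>insert a K. 1 - fps_const (y k) * fps_X)
     = fps_const (y a) * fps_X * ?P + (1 - fps_const (y a) * fps_X) * (- fps_X * fps_deriv ?P)"
    using insert(1,2) by (simp add: algebra_simps)
  also have "\<dots> = (1 - fps_const (y a) * fps_X) * Gf (y a) * ?P + (1 - fps_const (y a) * fps_X) * (?P * (\<Sum>k\<in>K. Gf (y k)))"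
    by (simp only: Gf_eq insert.IH)
  also have "\<dots> = (\<Prod>k\<in>insert a K. 1 - fps_const (y k) * fps_X) * (\<Sum>k\<in>insert a K. Gf (y k))"
    using insert(1,2) by (simp add: algebra_simps)
  finally show ?case .
qed

lemma zero_prefix_mult:
  fixes F H :: "real fps"
  assumes "\<forall>i\<le>m. F $ i = 0"
  shows "(F * H) $ m = 0"
  using assms by (simp add: fps_mult_nth)

lemma X_deriv_nth:
  fixes F :: "real fps"
  assumes "m \<ge> 1" shows "(fps_X * fps_deriv F) $ m = real m * F $ m"
  using assms by (cases m) (auto simp: fps_X_mult_nth)

lemma coeff_extract:
  fixes A B P :: "real fps" and x :: real
  assumes A0: "A $ 0 = 1" and B0: "B $ 0 = 0"
    and P: "P * (A - fps_const x * B) = - fps_X * fps_deriv (A - fps_const x * B)"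
    and m: "m \<ge> 1"
  shows "P $ m = (- fps_X * fps_deriv A * inverse A) $ m
     + (\<Sum>r=1..m. x ^ r * (real m / real r * ((B * inverse A) ^ r) $ m))"
proof -
  define V where "V = B * inverse A"
  define W where "W = inverse (1 - fps_const x * V)"
  have V0: "V $ 0 = 0" by (simp add: V_def A0 B0)
  have iA: "inverse A * A = 1" using A0 by (intro inverse_mult_eq_1) simp
  have AV: "A * V = B" unfolding V_def using iA by (metis mult.commute mult.left_neutral mult.assoc)
  have iW: "W * (1 - fps_const x * V) = 1" unfolding W_def using V0 by (intro inverse_mult_eq_1) simp
  define E where "E = - fps_X * fps_deriv A * inverse A + fps_const x * fps_X * fps_deriv V * W"
  have Psi: "A - fps_const x * B = A * (1 - fps_const x * V)" by (simp add: AV[symmetric] algebra_simps)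
  have dB: "fps_deriv B = fps_deriv A * V + A * fps_deriv V"
    using arg_cong[OF AV, of fps_deriv] by (simp add: algebra_simps)
  have "E * (A - fps_const x * B) = - fps_X * fps_deriv A * (inverse A * A) * (1 - fps_const x * V)
        + fps_const x * fps_X * fps_deriv V * A * (W * (1 - fps_const x * V))"
    unfolding E_def Psi by (simp add: algebra_simps)
  also have "\<dots> = - fps_X * fps_deriv (A - fps_const x * B)"
    unfolding iA iW by (simp add: dB algebra_simps)
  finally have "P * (A - fps_const x * B) = E * (A - fps_const x * B)" using P by simp
  moreover have "A - fps_const x * B \<noteq> 0" by (intro fps_nonzeroI[of _ 0]) (simp add: A0 B0)
  ultimately have PE: "P = E" by simp
  have geo: "W = (\<Sum>j<m. (fps_const x * V) ^ j) + (fps_const x * V) ^ m * W"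
  proof -
    have "1 - (fps_const x * V) ^ m = (1 - fps_const x * V) * (\<Sum>j<m. (fps_const x * V) ^ j)"
      by (rule one_diff_power_eq)
    hence "W * (1 - (fps_const x * V) ^ m) = (W * (1 - fps_const x * V)) * (\<Sum>j<m. (fps_const x * V) ^ j)"
      by (simp add: mult.assoc)
    thus ?thesis unfolding iW by (simp add: algebra_simps)
  qed
  have tail: "(fps_X * fps_deriv V * ((fps_const x * V) ^ m * W)) $ m = 0"
  proof -
    have "fps_X * fps_deriv V * ((fps_const x * V) ^ m * W) = (fps_X * V ^ m) * (fps_const (x ^ m) * fps_deriv V * W)"
      by (simp add: power_mult_distrib fps_const_power algebra_simps)
    moreover have "\<forall>i\<le>m. (fps_X * V ^ m) $ i = 0"
      using startsby_zero_power_prefix[OF V0, of m] by (auto simp: fps_X_mult_nth)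
    ultimately show ?thesis using zero_prefix_mult by metis
  qed
  have trm: "(fps_X * fps_deriv V * V ^ j) $ m = real m / real (Suc j) * (V ^ Suc j) $ m" for j
  proof -
    define D where "D = V ^ Suc j"
    have dD: "fps_deriv D = of_nat (Suc j) * fps_deriv V * V ^ j"
      unfolding D_def by (metis diff_Suc_1 fps_deriv_power')
    have eq: "fps_X * fps_deriv V * V ^ j = fps_const (1 / real (Suc j)) * (fps_X * fps_deriv D)"
      unfolding dD by (simp add: fps_of_nat[symmetric] fps_const_mult[symmetric] mult.assoc[symmetric] del: of_nat_Suc)
    have "(fps_X * fps_deriv D) $ m = real m * D $ m" by (rule X_deriv_nth[OF m])
    then show ?thesis unfolding eq D_def[symmetric] by simp
  qed
  have "(fps_X * fps_deriv V * W) $ m = (\<Sum>j<m. x ^ j * (fps_X * fps_deriv V * V ^ j) $ m)"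
  proof -
    have "fps_X * fps_deriv V * W = (\<Sum>j<m. fps_const (x ^ j) * (fps_X * fps_deriv V * V ^ j))
           + fps_X * fps_deriv V * ((fps_const x * V) ^ m * W)"
      by (subst geo) (simp add: algebra_simps sum_distrib_left power_mult_distrib fps_const_power)
    thus ?thesis using tail by (simp add: fps_sum_nth)
  qed
  also have "\<dots> = (\<Sum>j<m. x ^ j * (real m / real (Suc j) * (V ^ Suc j) $ m))"
    by (simp add: trm)
  finally have main: "x * (fps_X * fps_deriv V * W) $ m = (\<Sum>r=1..m. x ^ r * (real m / real r * (V ^ r) $ m))"
    by (simp add: sum_distrib_left sum.atLeast1_atMost_eq mult.assoc del: of_nat_Suc)
  show ?thesis unfolding PE E_def
    using main by (simp add: V_def mult.assoc)
qed



lemma ABp_eval: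
  assumes "cos t \<noteq> 0"
  shows "poly (fst (ABp j)) (tan t) = cos (real j * t) / cos t ^ j \<and>
         poly (snd (ABp j)) (tan t) = sin (real j * t) / cos t ^ j"
proof (induction j)
  case 0 then show ?case by simp
next
  case (Suc j)
  have e: "real (Suc j) * t = real j * t + t" by (simp add: algebra_simps)
  have c: "cos t ^ Suc j = cos t * cos t ^ j" by simp
  show ?case using Suc assms unfolding e c
    by (simp add: cos_add sin_add tan_def diff_divide_distrib add_divide_distrib)
qed

lemma ABp_degree: "degree (fst (ABp j)) \<le> j \<and> degree (snd (ABp j)) \<le> j"
proof (induction j)
  case 0 then show ?case by simp
next
  case (Suc j)
  have d1: "degree ([:0,1:] * p) \<le> Suc (degree p)" for p :: "real poly"
    using degree_mult_le[of "[:0,1:]" p] by simp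
  show ?case using Suc d1[of "fst (ABp j)"] d1[of "snd (ABp j)"]
    by (auto intro!: order.trans[OF degree_diff_le_max] order.trans[OF degree_add_le_max])
qed

lemma theta_facts:
  fixes \<alpha> :: real
  assumes "0 < \<alpha>" "\<alpha> < pi/2" "k < n"
  shows "0 < (\<alpha> + real k * pi) / real n" "(\<alpha> + real k * pi) / real n < pi"
    "cos ((\<alpha> + real k * pi) / real n) \<noteq> 0"
proof -
  have n0: "real n > 0" using assms by simp
  show "0 < (\<alpha> + real k * pi) / real n" using assms n0 by (intro divide_pos_pos add_pos_nonneg mult_nonneg_nonneg) auto
  have "\<alpha> + real k * pi < real n * pi"
  proof -
    have "real k + 1 \<le> real n" using assms by linarith
    hence "(real k + 1) * pi \<le> real n * pi" by (intro mult_right_mono) auto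
    thus ?thesis using assms pi_gt_zero by (simp add: algebra_simps)
  qed
  thus "(\<alpha> + real k * pi) / real n < pi" using n0 by (simp add: divide_less_eq mult.commute)
  show "cos ((\<alpha> + real k * pi) / real n) \<noteq> 0"
  proof
    assume "cos ((\<alpha> + real k * pi) / real n) = 0"
    then obtain i :: int where "(\<alpha> + real k * pi) / real n = of_int i * (pi/2)"
      by (auto simp: cos_zero_iff_int)
    hence "\<alpha> + real k * pi = of_int i * (pi/2) * real n" using n0 by (simp add: field_simps)
    hence "2 * \<alpha> = of_int (i * int n - 2 * int k) * pi" by (simp add: algebra_simps)
    moreover have "0 < 2 * \<alpha>" "2 * \<alpha> < pi" using assms by auto
    ultimately have "0 < real_of_int (i * int n - 2 * int k)" "real_of_int (i * int n - 2 * int k) < 1"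
      by (auto simp: zero_less_mult_iff mult_less_cancel_right2)
    hence "0 < i * int n - 2 * int k" "i * int n - 2 * int k < 1" by linarith+
    thus False by linarith
  qed
qed



lemma fps_lin: "fps_of_poly [:1, -c:] = 1 - fps_const (c::real) * fps_X"
  by (intro fps_ext) (simp add: coeff_pCons split: nat.split)

lemma main_identity:
  fixes \<alpha> :: real
  assumes a0: "0 < \<alpha>" and a1: "\<alpha> < pi/2" and n1: "n \<ge> 1" and m1: "m \<ge> 1"
  shows "Ssum m n \<alpha> = (- fps_X * fps_deriv (Af n) * inverse (Af n)) $ m
          + (\<Sum>r=1..m. cot \<alpha> ^ r * (real m / real r * (Vf n ^ r) $ m))"
proof -
  define x where "x = cot \<alpha>"
  define \<theta> where "\<theta> k = (\<alpha> + real k * pi) / real n" for k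
  define y where "y k = cot (\<theta> k)" for k
  define s where "s k = tan (\<theta> k)" for k
  have n0: "real n > 0" using n1 by simp
  have sa: "sin \<alpha> > 0" using a0 a1 by (intro sin_gt_zero) auto
  have th: "0 < \<theta> k" "\<theta> k < pi" "cos (\<theta> k) \<noteq> 0" if "k < n" for k
    using theta_facts[OF a0 a1 that] by (simp_all add: \<theta>_def)
  have sth: "sin (\<theta> k) > 0" if "k < n" for k using th[OF that] by (intro sin_gt_zero) auto
  have s0: "s k \<noteq> 0" if "k < n" for k using th[OF that] sth[OF that] by (simp add: s_def tan_def)
  have ys: "y k * s k = 1" if "k < n" for k
    using th[OF that] sth[OF that] by (simp add: s_def y_def tan_def cot_def)
  define Psi where "Psi = fst (ABp n) - smult x (snd (ABp n))"
  define Q where "Q = (\<Prod>k<n. [:1, - y k:])"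
  have Psi_s: "poly Psi (s k) = 0" if "k < n" for k
  proof -
    have nt: "real n * \<theta> k = \<alpha> + real k * pi" using n0 by (simp add: \<theta>_def)
    have "poly Psi (s k) = (cos (\<alpha> + real k * pi) - x * sin (\<alpha> + real k * pi)) / cos (\<theta> k) ^ n"
      using ABp_eval[OF th(3)[OF that], of n] by (simp add: Psi_def s_def nt diff_divide_distrib)
    also have "cos (\<alpha> + real k * pi) - x * sin (\<alpha> + real k * pi) = 0"
      using sa by (simp add: cos_add sin_add x_def cot_def)
    finally show ?thesis by simp
  qed
  have Psi_0: "poly Psi 0 = 1" using ABp_eval[of 0 n] by (simp add: Psi_def)
  have Q_s: "poly Q (s k) = 0" if "k < n" for k
    unfolding Q_def poly_prod using that ys[OF that]
    by (intro prod_zero) (auto simp: algebra_simps intro!: bexI[of _ k])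
  have Q_0: "poly Q 0 = 1" by (simp add: Q_def poly_prod)
  have inj: "inj_on s {..<n}"
  proof -
    have neq: "s j \<noteq> s k" if "j < k" "k < n" for j k
    proof
      assume eq: "s j = s k"
      have "sin (\<theta> k - \<theta> j) = sin (\<theta> k) * cos (\<theta> j) - cos (\<theta> k) * sin (\<theta> j)" by (rule sin_diff)
      also have "\<dots> = 0" using eq th(3)[of j] th(3)[of k] that by (simp add: s_def tan_def field_simps)
      finally have z: "sin (\<theta> k - \<theta> j) = 0" .
      have "\<theta> k - \<theta> j = (real k - real j) * pi / real n" using n0 by (simp add: \<theta>_def field_simps)
      moreover have "0 < (real k - real j) * pi / real n" using that n0 by simp
      moreover have "(real k - real j) * pi / real n < pi"
        using that n0 by (simp add: divide_less_eq)
      ultimately have "sin (\<theta> k - \<theta> j) > 0" by (intro sin_gt_zero) auto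
      with z show False by simp
    qed
    show ?thesis
    proof (rule inj_onI)
      fix j k assume "j \<in> {..<n}" "k \<in> {..<n}" "s j = s k"
      thus "j = k" using neq by (metis lessThan_iff linorder_neqE_nat)
    qed
  qed
  have card: "card (insert 0 (s ` {..<n})) = n + 1"
    using inj s0 by (subst card_insert_disjoint) (auto simp: card_image)
  have degPsi: "degree Psi \<le> n"
    using ABp_degree[of n] unfolding Psi_def
    by (intro order.trans[OF degree_diff_le_max]) (auto intro: order.trans[OF degree_smult_le])
  have degQ: "degree Q \<le> n"
  proof -
    have "degree Q \<le> (\<Sum>k<n. degree [:1, - y k:])" unfolding Q_def
      using degree_prod_sum_le[of "{..<n}" "\<lambda>k. [:1, - y k:]"] by (simp add: o_def)
    also have "\<dots> \<le> (\<Sum>k<n. 1)" by (intro sum_mono) simp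
    finally show ?thesis by simp
  qed
  have PQ: "Psi = Q"
    by (rule poly_eqI_degree[of "insert 0 (s ` {..<n})"])
       (use Psi_s Q_s Psi_0 Q_0 card degPsi degQ in auto)
  have fPsi: "fps_of_poly Psi = Af n - fps_const x * Bf n"
    by (simp add: Psi_def Af_def Bf_def fps_of_poly_diff fps_of_poly_smult)
  have fQ: "fps_of_poly Q = (\<Prod>k<n. 1 - fps_const (y k) * fps_X)"
    by (simp add: Q_def fps_of_poly_prod fps_lin)
  define P where "P = (\<Sum>k<n. Gf (y k))"
  have "P * (Af n - fps_const x * Bf n) = - fps_X * fps_deriv (Af n - fps_const x * Bf n)"
    using newton[of "{..<n}" y] unfolding P_def fPsi[symmetric] PQ fQ by (simp add: mult.commute)
  from coeff_extract[OF conjunct1[OF AB_nth0] conjunct2[OF AB_nth0] this m1]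
  have "P $ m = (- fps_X * fps_deriv (Af n) * inverse (Af n)) $ m
     + (\<Sum>r=1..m. x ^ r * (real m / real r * (Vf n ^ r) $ m))" by (simp add: Vf_def)
  moreover have "P $ m = Ssum m n \<alpha>"
    using m1 by (simp add: P_def fps_sum_nth Gf_def Ssum_def y_def \<theta>_def)
  ultimately show ?thesis by (simp add: x_def)
qed



lemma tan_formula:
  assumes r1: "r \<ge> 1" and rm: "r \<le> m"
  shows "real m / real r * (Vf n ^ r) $ m =
    1 / (real r * fact (m - 1)) * (\<Sum>k=r..m. real n ^ k * arctan_num m k * tan_num k r)"
proof -
  define b where "b = fps_const (real n) * fps_arctan"
  have b0: "b $ 0 = 0" by (simp add: b_def arctan_nth0)
  have t0: "fps_tan (1::real) $ 0 = 0" by (simp add: fps_tan_def fps_divide_unit)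
  have "Vf n ^ r = (fps_tan 1 ^ r) oo b"
    by (simp add: U_eq_V[symmetric] Uf_def b_def[symmetric] fps_compose_power[OF b0])
  hence "(Vf n ^ r) $ m = ((fps_tan 1 ^ r) oo b) $ m" by simp
  also have "\<dots> = (\<Sum>i=0..m. (fps_tan 1 ^ r) $ i * (real n ^ i * (fps_arctan ^ i) $ m))"
    by (simp add: fps_compose_nth b_def power_mult_distrib fps_const_power)
  also have "\<dots> = (\<Sum>i=r..m. (fps_tan 1 ^ r) $ i * (real n ^ i * (fps_arctan ^ i) $ m))"
    using startsby_zero_power_prefix[OF t0, of r]
    by (intro sum.mono_neutral_right) auto
  finally have V: "(Vf n ^ r) $ m = (\<Sum>i=r..m. (fps_tan 1 ^ r) $ i * (real n ^ i * (fps_arctan ^ i) $ m))" .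
  have fm: "(fact m :: real) = real m * fact (m - 1)" using r1 rm by (simp add: fact_reduce)
  have "(\<Sum>k=r..m. real n ^ k * arctan_num m k * tan_num k r)
      = fact m * (\<Sum>i=r..m. (fps_tan 1 ^ r) $ i * (real n ^ i * (fps_arctan ^ i) $ m))"
    by (simp add: arctan_num_def tan_num_def sum_distrib_left mult_ac)
  then show ?thesis unfolding V fm by simp
qed

theorem corollary6p7:
  fixes m n :: nat and p :: "nat \<Rightarrow> nat \<Rightarrow> real"
  assumes "m \<ge> 1" and "n \<ge> 2"
    and "\<forall>M \<in> {m, 2 * m}. \<forall>\<alpha>::real. (\<forall>j::int. \<alpha> \<noteq> real_of_int j * pi) \<longrightarrow>
           Ssum M n \<alpha> = (\<Sum>r\<le>M. p M r * cot \<alpha> ^ r)"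
  shows "p (2 * m) 0 = Ssum (2 * m) n (pi / 2) \<and>
    (\<forall>r \<in> {1..m}. p m r =
           1 / (real r * fact (m - 1)) * (\<Sum>k=r..m. real n ^ k * arctan_num m k * tan_num k r))"
proof -
  have H: "Ssum M n \<alpha> = (\<Sum>r\<le>M. p M r * cot \<alpha> ^ r)"
    if "M \<in> {m, 2 * m}" "0 < \<alpha>" "\<alpha> < pi" for M \<alpha>
  proof -
    have "\<alpha> \<noteq> real_of_int j * pi" for j :: int
    proof
      assume "\<alpha> = real_of_int j * pi"
      with that have "0 < real_of_int j" "real_of_int j < 1"
        by (auto simp: zero_less_mult_iff)
      hence "0 < j" "j < 1" by simp_all
      thus False by linarith
    qed
    with assms(3) that show ?thesis by blast
  qed
  have "Ssum (2 * m) n (pi / 2) = (\<Sum>r\<le>2 * m. p (2 * m) r * cot (pi / 2) ^ r)"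
    by (rule H) auto
  also have "\<dots> = (\<Sum>r\<le>2 * m. if r = 0 then p (2 * m) r else 0)"
    by (intro sum.cong) (auto simp: cot_def)
  also have "\<dots> = p (2 * m) 0" by simp
  finally have part1: "p (2 * m) 0 = Ssum (2 * m) n (pi / 2)" by simp
  define c0 where "c0 = (- fps_X * fps_deriv (Af n) * inverse (Af n)) $ m"
  define q where "q r = (if r = 0 then c0 else real m / real r * (Vf n ^ r) $ m)" for r
  define d where "d r = p m r - q r" for r
  define R where "R = (\<Sum>r\<le>m. monom (d r) r)"
  have root: "poly R x = 0" if "x > 0" for x :: real
  proof -
    define \<alpha> where "\<alpha> = arctan (1 / x)"
    have a0: "0 < \<alpha>" using that by (simp add: \<alpha>_def arctan_less_zero_iff[symmetric] not_le[symmetric])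
    have a1: "\<alpha> < pi / 2" using arctan_ubound by (simp add: \<alpha>_def)
    have "cot \<alpha> = inverse (tan \<alpha>)" by (simp add: cot_def tan_def)
    hence cx: "cot \<alpha> = x" by (simp add: \<alpha>_def tan_arctan)
    have "(\<Sum>r\<le>m. p m r * x ^ r) = Ssum m n \<alpha>" using H[of m \<alpha>] a0 a1 cx by simp
    also have "\<dots> = c0 + (\<Sum>r=1..m. x ^ r * q r)"
      using main_identity[OF a0 a1, of n m] assms(1,2) cx by (simp add: c0_def q_def)
    also have "\<dots> = (\<Sum>r\<le>m. q r * x ^ r)"
      by (simp add: sum.atMost_shift sum.atLeast1_atMost_eq q_def mult.commute)
    finally have "(\<Sum>r\<le>m. d r * x ^ r) = 0" by (simp add: d_def algebra_simps sum_subtractf)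
    thus ?thesis by (simp add: R_def poly_sum poly_monom)
  qed
  have "R = 0"
  proof (rule ccontr)
    assume "R \<noteq> 0"
    hence "finite {x. poly R x = 0}" by (rule poly_roots_finite)
    moreover have "{0<..} \<subseteq> {x. poly R x = 0}" using root by auto
    ultimately have "finite {0::real<..}" by (rule finite_subset[rotated])
    thus False using infinite_Ioi by blast
  qed
  have dz: "d r = 0" if "r \<le> m" for r
  proof -
    have "coeff R r = d r" using that by (simp add: R_def coeff_sum coeff_monom)
    thus ?thesis using \<open>R = 0\<close> by simp
  qed
  have part2: "\<forall>r\<in>{1..m}. p m r =
           1 / (real r * fact (m - 1)) * (\<Sum>k=r..m. real n ^ k * arctan_num m k * tan_num k r)"
  proof
    fix r assume r: "r \<in> {1..m}"
    hence "p m r = q r" using dz[of r] by (simp add: d_def)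
    also have "\<dots> = real m / real r * (Vf n ^ r) $ m" using r by (simp add: q_def)
    also have "\<dots> = 1 / (real r * fact (m - 1)) * (\<Sum>k=r..m. real n ^ k * arctan_num m k * tan_num k r)"
      using r by (intro tan_formula) auto
    finally show "p m r = 1 / (real r * fact (m - 1)) * (\<Sum>k=r..m. real n ^ k * arctan_num m k * tan_num k r)" .
  qed
  show ?thesis using part1 part2 by blast
qed

end
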